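(* Let $X$ be a locally compact Hausdorff totally disconnected space, $G$ a discrete group, $K$ a field, $\phi=(\phi_g,X_g,X)_{g\in G}$ a partial action of $G$ on $X$ (with $X_g$ open), and $I$ an ideal of $C_K(X)\rtimes_\phi G$. With $V_I=\bigcup\{\operatorname{supp}(f): f\delta_\varepsilon\in I\}$, one has $C_K(V_I)\rtimes_{\phi|_{V_I}}G\subseteq I$, and $C_K(V_I)\rtimes_{\phi|_{V_I}}G$ is the largest graded ideal of $C_K(X)\rtimes_\phi G$ contained in $I$.
   Context: A partial action of $G$ (identity $\varepsilon$) on a topological space $X$ is $(\phi_g,X_g,X)_{g\in G}$ with $X_g$ open, homeomorphisms $\phi_g:X_{g^{-1}}\to X_g$, and (i) $X_\varepsilon=X$, $\phi_\varepsilon=\operatorname{id}$; (ii) $\phi_g(X_{g^{-1}}\cap X_h)=X_g\cap X_{gh}$; (iii) $\phi_g\phi_h(x)=\phi_{gh}(x)$ for $x\in X_{h^{-1}}\cap X_{h^{-1}g^{-1}}$. $V\subseteq X$ is invariant if $\phi_{g^{-1}}(X_g\cap V)\subseteq X_{g^{-1}}\cap V$ for all $g$ (and $V_I$ is open invariant). $C_K(Y)$ is the algebra of compactly supported locally constant functions $Y\to K$; $C_K(W)$ for open $W$ is the ideal of functions vanishing off $W$; $\phi_g(f)=f\circ\phi_{g^{-1}}$. The partial skew group ring $C_K(X)\rtimes_\phi G$ consists of finite sums $\sum a_g\delta_g$, $a_g\in C_K(X_g)$, with product $(a_g\delta_g)(b_h\delta_h)=\phi_g(\phi_{g^{-1}}(a_g)b_h)\delta_{gh}$,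 graded by $\deg(a_g\delta_g)=g$; for open invariant $V$, $C_K(V)\rtimes_{\phi|_V}G=\{\sum a_g\delta_g: a_g\in C_K(V\cap X_g)\}$. An ideal is graded if it is the direct sum of its intersections with the homogeneous components. *)

theory Defs
  imports "HOL-Analysis.Analysis" "HOL-Algebra.Group"
begin

definition totally_disconnected_space :: "'a topology \<Rightarrow> bool" where
  "totally_disconnected_space T \<longleftrightarrow>
     (\<forall>S. S \<subseteq> topspace T \<and> connectedin T S \<longrightarrow> S = {} \<or> (\<exists>x. S = {x}))"

text \<open>Partial action of the group G on the whole space (the type 'x with its
  topology): Xg g is the open domain X_g, ph g is the map phi_g : X_(g^-1) -> X_g.\<close>
definition partial_action ::
  "('g, 'm) monoid_scheme \<Rightarrow> ('g \<Rightarrow> 'x::topological_space set) \<Rightarrow> ('g \<Rightarrow> 'x \<Rightarrow> 'x) \<Rightarrow> bool" where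
  "partial_action G Xg ph \<longleftrightarrow>
     (\<forall>g\<in>carrier G. open (Xg g)) \<and>
     (\<forall>g\<in>carrier G. \<exists>psi. homeomorphism (Xg (inv\<^bsub>G\<^esub> g)) (Xg g) (ph g) psi) \<and>
     Xg \<one>\<^bsub>G\<^esub> = UNIV \<and> (\<forall>x. ph \<one>\<^bsub>G\<^esub> x = x) \<and>
     (\<forall>g\<in>carrier G. \<forall>h\<in>carrier G.
        ph g ` (Xg (inv\<^bsub>G\<^esub> g) \<inter> Xg h) = Xg g \<inter> Xg (g \<otimes>\<^bsub>G\<^esub> h)) \<and>
     (\<forall>g\<in>carrier G. \<forall>h\<in>carrier G.
        \<forall>x \<in> Xg (inv\<^bsub>G\<^esub> h) \<inter> Xg (inv\<^bsub>G\<^esub> h \<otimes>\<^bsub>G\<^esub> inv\<^bsub>G\<^esub> g).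
          ph g (ph h x) = ph (g \<otimes>\<^bsub>G\<^esub> h) x)"

definition CK :: "('x::topological_space \<Rightarrow> 'k::field) set" where
  "CK = {f. (\<forall>x. \<exists>U. open U \<and> x \<in> U \<and> (\<forall>y\<in>U. f y = f x))
            \<and> compact (closure {x. f x \<noteq> 0})}"

definition CK_on :: "'x::topological_space set \<Rightarrow> ('x \<Rightarrow> 'k::field) set" where
  "CK_on W = {f \<in> CK. \<forall>x. x \<notin> W \<longrightarrow> f x = 0}"

definition supp :: "('x::topological_space \<Rightarrow> 'k::zero) \<Rightarrow> 'x set" where
  "supp f = closure {x. f x \<noteq> 0}"

definition act_fun ::
  "('g, 'm) monoid_scheme \<Rightarrow> ('g \<Rightarrow> 'x set) \<Rightarrow> ('g \<Rightarrow> 'x \<Rightarrow> 'x) \<Rightarrow> 'g \<Rightarrow> ('x \<Rightarrow> 'k::zero) \<Rightarrow> 'x \<Rightarrow> 'k" where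
  "act_fun G Xg ph g f = (\<lambda>x. if x \<in> Xg g then f (ph (inv\<^bsub>G\<^esub> g) x) else 0)"

text \<open>Elements of the partial skew group ring are represented as finitely supported
  families a : G -> C_K(X), with a g \<in> C_K(X_g) (a g is the coefficient of delta_g).\<close>
definition skew_ring ::
  "('g, 'm) monoid_scheme \<Rightarrow> ('g \<Rightarrow> 'x::topological_space set) \<Rightarrow> ('g \<Rightarrow> 'x \<Rightarrow> 'k::field) set" where
  "skew_ring G Xg = {a. (\<forall>g. g \<notin> carrier G \<longrightarrow> a g = (\<lambda>_. 0)) \<and>
                        finite {g. a g \<noteq> (\<lambda>_. 0)} \<and>
                        (\<forall>g\<in>carrier G. a g \<in> CK_on (Xg g))}"

definition skew_zero :: "'g \<Rightarrow> 'x \<Rightarrow> 'k::field" where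
  "skew_zero = (\<lambda>_ _. 0)"

definition skew_add :: "('g \<Rightarrow> 'x \<Rightarrow> 'k::field) \<Rightarrow> ('g \<Rightarrow> 'x \<Rightarrow> 'k) \<Rightarrow> 'g \<Rightarrow> 'x \<Rightarrow> 'k" where
  "skew_add a b = (\<lambda>g x. a g x + b g x)"

definition skew_neg :: "('g \<Rightarrow> 'x \<Rightarrow> 'k::field) \<Rightarrow> 'g \<Rightarrow> 'x \<Rightarrow> 'k" where
  "skew_neg a = (\<lambda>g x. - a g x)"

text \<open>(a_g delta_g)(b_h delta_h) = phi_g(phi_(g^-1)(a_g) b_h) delta_(gh), extended bilinearly.\<close>
definition skew_mult ::
  "('g, 'm) monoid_scheme \<Rightarrow> ('g \<Rightarrow> 'x set) \<Rightarrow> ('g \<Rightarrow> 'x \<Rightarrow> 'x) \<Rightarrow>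
   ('g \<Rightarrow> 'x \<Rightarrow> 'k::field) \<Rightarrow> ('g \<Rightarrow> 'x \<Rightarrow> 'k) \<Rightarrow> 'g \<Rightarrow> 'x \<Rightarrow> 'k" where
  "skew_mult G Xg ph a b = (\<lambda>k.
     if k \<in> carrier G then
       (\<lambda>x. \<Sum>g\<in>{g\<in>carrier G. a g \<noteq> (\<lambda>_. 0)}.
              act_fun G Xg ph g
                (\<lambda>y. act_fun G Xg ph (inv\<^bsub>G\<^esub> g) (a g) y * b (inv\<^bsub>G\<^esub> g \<otimes>\<^bsub>G\<^esub> k) y) x)
     else (\<lambda>_. 0))"

definition skew_ideal ::
  "('g, 'm) monoid_scheme \<Rightarrow> ('g \<Rightarrow> 'x::topological_space set) \<Rightarrow> ('g \<Rightarrow> 'x \<Rightarrow> 'x) \<Rightarrow>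
   ('g \<Rightarrow> 'x \<Rightarrow> 'k::field) set \<Rightarrow> bool" where
  "skew_ideal G Xg ph I \<longleftrightarrow>
     I \<subseteq> skew_ring G Xg \<and> skew_zero \<in> I \<and>
     (\<forall>a\<in>I. \<forall>b\<in>I. skew_add a b \<in> I) \<and> (\<forall>a\<in>I. skew_neg a \<in> I) \<and>
     (\<forall>a\<in>I. \<forall>r\<in>skew_ring G Xg. skew_mult G Xg ph r a \<in> I \<and> skew_mult G Xg ph a r \<in> I)"

definition homog :: "('g \<Rightarrow> 'x \<Rightarrow> 'k::zero) \<Rightarrow> 'g \<Rightarrow> 'g \<Rightarrow> 'x \<Rightarrow> 'k" where
  "homog a g = (\<lambda>h. if h = g then a g else (\<lambda>_. 0))"

text \<open>Graded: I is the direct sum of its intersections with the homogeneous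
  components, i.e. every homogeneous component of an element of I lies in I.\<close>
definition graded :: "('g, 'm) monoid_scheme \<Rightarrow> ('g \<Rightarrow> 'x \<Rightarrow> 'k::zero) set \<Rightarrow> bool" where
  "graded G I \<longleftrightarrow> (\<forall>a\<in>I. \<forall>g\<in>carrier G. homog a g \<in> I)"

definition skew_restr ::
  "('g, 'm) monoid_scheme \<Rightarrow> ('g \<Rightarrow> 'x::topological_space set) \<Rightarrow> 'x set \<Rightarrow> ('g \<Rightarrow> 'x \<Rightarrow> 'k::field) set" where
  "skew_restr G Xg V = {a \<in> skew_ring G Xg. \<forall>g\<in>carrier G. a g \<in> CK_on (V \<inter> Xg g)}"

definition V_of :: "('g, 'm) monoid_scheme \<Rightarrow> ('g \<Rightarrow> 'x::topological_space \<Rightarrow> 'k::field) set \<Rightarrow> 'x set" where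
  "V_of G I = \<Union>{supp f | f. (\<lambda>h. if h = \<one>\<^bsub>G\<^esub> then f else (\<lambda>_. 0)) \<in> I}"

end

theory Submission
  imports Defs
begin


lemma Hausdorff_t2: "Hausdorff_space (euclidean :: 'x::t2_space topology)"
  unfolding Hausdorff_space_def using hausdorff by (simp add: disjnt_def) blast

lemma zero_dim:
  fixes W :: "'x::t2_space set"
  assumes lc: "locally_compact_space (euclidean :: 'x topology)"
    and td: "totally_disconnected_space (euclidean :: 'x topology)"
    and W: "open W" "x \<in> W"
  obtains U where "open U" "compact U" "x \<in> U" "U \<subseteq> W"
proof -
  obtain N K where NK: "open N" "compact K" "x \<in> N" "N \<subseteq> K"
    using lc unfolding locally_compact_space_def by (metis UNIV_I compactin_euclidean_iff open_openin topspace_euclidean)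
  define C where "C = connected_component_of_set (euclidean::'x topology) x"
  have "connectedin euclidean C" unfolding C_def by (rule connectedin_connected_component_of)
  moreover have "x \<in> C" unfolding C_def by (simp add: connected_component_of_refl)
  ultimately have C: "C = {x}" using td unfolding totally_disconnected_space_def by auto
  have "C \<in> connected_components_of euclidean" unfolding C_def
    by (simp only: connected_component_in_connected_components_of topspace_euclidean UNIV_I)
  then obtain U V where UV: "openin euclidean U" "openin euclidean V" "disjnt U V"
      "U \<union> V = topspace euclidean" "C \<subseteq> U" "U \<subseteq> W \<inter> N"
    using wilder_locally_compact_component_thm[OF lc Hausdorff_t2, of C "W \<inter> N"] C W NK
    by auto
  have "U = - V" using UV by (auto simp: disjnt_def)
  then have "closed U" using UV by auto
  then have "compact (K \<inter> U)" using NK compact_Int_closed by blast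
  moreover have "K \<inter> U = U" using UV NK by auto
  ultimately show ?thesis using that UV C by auto
qed



definition mon :: "'g \<Rightarrow> ('x \<Rightarrow> 'k::zero) \<Rightarrow> 'g \<Rightarrow> 'x \<Rightarrow> 'k" where
  "mon g f = (\<lambda>h. if h = g then f else (\<lambda>_. 0))"

lemma homog_mono: "homog a g = mon g (a g)"
  by (simp add: homog_def mon_def)

lemma CK_locconst: "f \<in> CK \<Longrightarrow> \<exists>U. open U \<and> x \<in> U \<and> (\<forall>y\<in>U. f y = f x)"
  by (simp add: CK_def)

lemma CK_open_supp: "f \<in> CK \<Longrightarrow> open {x. f x \<noteq> (0::'k::field)}"
  unfolding open_dist[symmetric] open_subopen[of "{x. f x \<noteq> 0}"]
  by (metis (mono_tags, lifting) CK_locconst mem_Collect_eq subsetI)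

lemma CK_closed_supp: "f \<in> CK \<Longrightarrow> closed {x. f x \<noteq> (0::'k::field)}"
proof -
  assume f: "f \<in> CK"
  have "open {x. f x = 0}"
    unfolding open_subopen[of "{x. f x = 0}"]
    by (metis (mono_tags, lifting) CK_locconst[OF f] mem_Collect_eq subsetI)
  then show ?thesis unfolding closed_def by (simp add: Compl_eq)
qed

lemma CK_supp_eq: "f \<in> CK \<Longrightarrow> closure {x. f x \<noteq> (0::'k::field)} = {x. f x \<noteq> 0}"
  by (simp add: CK_closed_supp)

lemma CK_compact_supp: "f \<in> CK \<Longrightarrow> compact {x. f x \<noteq> (0::'k::field)}"
  using CK_supp_eq[of f] by (simp add: CK_def)

lemma zero_CK_on: "(\<lambda>_. 0::'k::field) \<in> CK_on W"
  unfolding CK_on_def CK_def by auto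

lemma indicator_CK_on:
  fixes U :: "'x::t2_space set"
  assumes "open U" "compact U" "U \<subseteq> W"
  shows "(\<lambda>x. if x \<in> U then 1 else (0::'k::field)) \<in> CK_on W"
proof -
  have cl: "closed U" using assms compact_imp_closed by blast
  have lc: "\<exists>V. open V \<and> x \<in> V \<and> (\<forall>y\<in>V. (if y \<in> U then 1 else (0::'k)) = (if x \<in> U then 1 else 0))" for x
  proof (cases "x \<in> U")
    case True then show ?thesis using assms by (intro exI[of _ U]) auto
  next
    case False then show ?thesis using cl by (intro exI[of _ "-U"]) (auto simp: open_Compl)
  qed
  have "{x. (if x \<in> U then 1 else (0::'k)) \<noteq> 0} = U" by auto
  then show ?thesis using lc assms cl unfolding CK_on_def CK_def by auto
qed

lemma exists_bump:
  fixes W :: "'x::t2_space set"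
  assumes lc: "locally_compact_space (euclidean :: 'x topology)"
    and td: "totally_disconnected_space (euclidean :: 'x topology)"
    and W: "open W" "x \<in> W"
  shows "\<exists>c::'x\<Rightarrow>'k::field. c \<in> CK_on W \<and> c x = 1"
proof -
  obtain U where "open U" "compact U" "x \<in> U" "U \<subseteq> W" using zero_dim[OF lc td W] by blast
  then show ?thesis using indicator_CK_on[of U W] by (intro exI[of _ "\<lambda>x. if x \<in> U then 1 else 0"]) auto
qed

context
  fixes G :: "('g, 'm) monoid_scheme"
    and Xg :: "'g \<Rightarrow> 'x::t2_space set"
    and ph :: "'g \<Rightarrow> 'x \<Rightarrow> 'x"
  assumes grp: "group G"
    and pa: "partial_action G Xg ph"
begin

lemma pa_open: "g \<in> carrier G \<Longrightarrow> open (Xg g)"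
  using pa by (simp add: partial_action_def)

lemma pa_one: "Xg \<one>\<^bsub>G\<^esub> = UNIV" "ph \<one>\<^bsub>G\<^esub> x = x"
  using pa by (simp_all add: partial_action_def)

lemma pa_maps: assumes g: "g \<in> carrier G" and x: "x \<in> Xg g"
  shows "ph (inv\<^bsub>G\<^esub> g) x \<in> Xg (inv\<^bsub>G\<^esub> g)"
proof -
  have ig: "inv\<^bsub>G\<^esub> g \<in> carrier G" using grp g by simp
  have "ph (inv\<^bsub>G\<^esub> g) ` (Xg (inv\<^bsub>G\<^esub> (inv\<^bsub>G\<^esub> g)) \<inter> Xg \<one>\<^bsub>G\<^esub>) =
        Xg (inv\<^bsub>G\<^esub> g) \<inter> Xg (inv\<^bsub>G\<^esub> g \<otimes>\<^bsub>G\<^esub> \<one>\<^bsub>G\<^esub>)"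
    using pa ig grp unfolding partial_action_def by (meson group.is_monoid monoid.one_closed)
  then show ?thesis using x g grp pa_one by (auto simp: group.inv_inv)
qed

lemma pa_comp: assumes g: "g \<in> carrier G" and x: "x \<in> Xg g"
  shows "ph g (ph (inv\<^bsub>G\<^esub> g) x) = x"
proof -
  have ig: "inv\<^bsub>G\<^esub> g \<in> carrier G" using grp g by simp
  have "\<forall>x \<in> Xg (inv\<^bsub>G\<^esub> (inv\<^bsub>G\<^esub> g)) \<inter> Xg (inv\<^bsub>G\<^esub> (inv\<^bsub>G\<^esub> g) \<otimes>\<^bsub>G\<^esub> inv\<^bsub>G\<^esub> g).
          ph g (ph (inv\<^bsub>G\<^esub> g) x) = ph (g \<otimes>\<^bsub>G\<^esub> inv\<^bsub>G\<^esub> g) x"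
    using pa g ig unfolding partial_action_def by blast
  then show ?thesis using x g grp pa_one by (simp add: group.inv_inv group.r_inv)
qed

lemma inv_one': "inv\<^bsub>G\<^esub> \<one>\<^bsub>G\<^esub> = \<one>\<^bsub>G\<^esub>"
  using grp by (simp add: group.is_monoid monoid.inv_one)

lemma act_fun_zero: "act_fun G Xg ph g (\<lambda>_. 0) = (\<lambda>_. 0)"
  by (simp add: act_fun_def)

lemma act_fun_one: "act_fun G Xg ph \<one>\<^bsub>G\<^esub> f = f"
  using grp pa_one inv_one' by (simp add: act_fun_def)

lemma mono_mult:
  assumes g: "g \<in> carrier G" and h: "h \<in> carrier G"
  shows "skew_mult G Xg ph (mon g a) (mon h b) =
    mon (g \<otimes>\<^bsub>G\<^esub> h) (act_fun G Xg ph g (\<lambda>y. act_fun G Xg ph (inv\<^bsub>G\<^esub> g) a y * b y))"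
proof (rule ext, rule ext)
  fix k x
  have gh: "g \<otimes>\<^bsub>G\<^esub> h \<in> carrier G" using grp g h by (simp add: group.is_monoid monoid.m_closed)
  have ig: "inv\<^bsub>G\<^esub> g \<in> carrier G" using grp g by simp
  show "skew_mult G Xg ph (mon g a) (mon h b) k x =
    mon (g \<otimes>\<^bsub>G\<^esub> h) (act_fun G Xg ph g (\<lambda>y. act_fun G Xg ph (inv\<^bsub>G\<^esub> g) a y * b y)) k x"
  proof (cases "k \<in> carrier G")
    case False
    then show ?thesis using gh by (auto simp: skew_mult_def mon_def)
  next
    case k: True
    have iff: "inv\<^bsub>G\<^esub> g \<otimes>\<^bsub>G\<^esub> k = h \<longleftrightarrow> k = g \<otimes>\<^bsub>G\<^esub> h"
      using group.inv_solve_left'[OF grp h g k] .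
    show ?thesis
    proof (cases "a = (\<lambda>_. 0)")
      case True
      then show ?thesis using k by (simp add: skew_mult_def mon_def act_fun_zero act_fun_def)
    next
      case False
      have S: "{g'\<in>carrier G. mon g a g' \<noteq> (\<lambda>_. 0)} = {g}" using False g by (auto simp: mon_def)
      show ?thesis using k iff unfolding skew_mult_def S
        by (auto simp: mon_def act_fun_def)
    qed
  qed
qed

lemma mono_mult_one:
  assumes h: "h \<in> carrier G"
  shows "skew_mult G Xg ph (mon \<one>\<^bsub>G\<^esub> a) (mon h b) = mon h (\<lambda>y. a y * b y)"
  using mono_mult[of "\<one>\<^bsub>G\<^esub>" h a b] grp h
  by (simp add: act_fun_one group.is_monoid monoid.one_closed inv_one')

lemma act_eval:
  assumes g: "g \<in> carrier G" and x: "x \<in> Xg g"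
  shows "act_fun G Xg ph g (\<lambda>y. act_fun G Xg ph (inv\<^bsub>G\<^esub> g) a y * b y) x = a x * b (ph (inv\<^bsub>G\<^esub> g) x)"
  using pa_maps[OF g x] pa_comp[OF g x] g x grp by (simp add: act_fun_def group.inv_inv)

lemma ring_out: "a \<in> skew_ring G Xg \<Longrightarrow> g \<notin> carrier G \<Longrightarrow> a g = (\<lambda>_. 0)"
  by (simp add: skew_ring_def)

lemma ring_in: "a \<in> skew_ring G Xg \<Longrightarrow> g \<in> carrier G \<Longrightarrow> a g \<in> CK_on (Xg g)"
  by (simp add: skew_ring_def)

lemma mono_ring: "g \<in> carrier G \<Longrightarrow> b \<in> CK_on (Xg g) \<Longrightarrow> mon g b \<in> skew_ring G Xg"
  unfolding skew_ring_def mon_def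
  by (auto simp: zero_CK_on intro: finite_subset[of _ "{g}"])

end


lemma mono_zero: "mon g (\<lambda>_. 0::'k::field) = (skew_zero :: 'g \<Rightarrow> 'x \<Rightarrow> 'k)"
  by (auto simp: mon_def skew_zero_def fun_eq_iff)

lemma CK_on_CK: "f \<in> CK_on W \<Longrightarrow> f \<in> CK" by (simp add: CK_on_def)

lemma CK_on_mono: "f \<in> CK_on A \<Longrightarrow> A \<subseteq> B \<Longrightarrow> f \<in> CK_on B"
  by (auto simp: CK_on_def)

lemma compact_closure_sub:
  fixes S :: "'x::t2_space set"
  assumes "compact T" "S \<subseteq> T" shows "compact (closure S)"
proof -
  have "closure S \<subseteq> T" using assms by (simp add: closure_minimal compact_imp_closed)
  then have "T \<inter> closure S = closure S" by blast
  then show ?thesis using compact_Int_closed[OF assms(1), of "closure S"] by simp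
qed

lemma CK_add:
  fixes f g :: "'x::t2_space \<Rightarrow> 'k::field"
  assumes f: "f \<in> CK_on W" and g: "g \<in> CK_on W"
  shows "(\<lambda>x. f x + g x) \<in> CK_on W"
proof -
  have fC: "f \<in> CK" and gC: "g \<in> CK" using f g by (auto simp: CK_on_def)
  have lc: "\<exists>U. open U \<and> x \<in> U \<and> (\<forall>y\<in>U. f y + g y = f x + g x)" for x
  proof -
    obtain U1 where U1: "open U1" "x \<in> U1" "\<forall>y\<in>U1. f y = f x" using CK_locconst[OF fC] by blast
    obtain U2 where U2: "open U2" "x \<in> U2" "\<forall>y\<in>U2. g y = g x" using CK_locconst[OF gC] by blast
    have "open (U1 \<inter> U2)" "x \<in> U1 \<inter> U2" using U1 U2 by auto
    moreover have "\<forall>y\<in>U1 \<inter> U2. f y = f x \<and> g y = g x" using U1(3) U2(3) by blast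
    ultimately show ?thesis by (metis (no_types, lifting))
  qed
  have "compact ({x. f x \<noteq> 0} \<union> {x. g x \<noteq> 0})"
    using compact_Un[OF CK_compact_supp[OF fC] CK_compact_supp[OF gC]] .
  moreover have "{x. f x + g x \<noteq> 0} \<subseteq> {x. f x \<noteq> 0} \<union> {x. g x \<noteq> 0}" by auto
  ultimately have cmp: "compact (closure {x. f x + g x \<noteq> 0})" by (rule compact_closure_sub)
  have van: "\<forall>x. x \<notin> W \<longrightarrow> f x + g x = 0" using f g by (simp add: CK_on_def)
  show ?thesis unfolding CK_on_def CK_def mem_Collect_eq using lc cmp van by blast
qed

lemma CK_neg:
  fixes f :: "'x::t2_space \<Rightarrow> 'k::field"
  assumes f: "f \<in> CK_on W"
  shows "(\<lambda>x. - f x) \<in> CK_on W"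
proof -
  have fC: "f \<in> CK" using f by (simp add: CK_on_def)
  have "{x. - f x \<noteq> 0} = {x. f x \<noteq> 0}" by simp
  moreover have "\<exists>U. open U \<and> x \<in> U \<and> (\<forall>y\<in>U. - f y = - f x)" for x
    using CK_locconst[OF fC, of x] by auto
  moreover have "\<forall>x. x \<notin> W \<longrightarrow> - f x = 0" using f by (simp add: CK_on_def)
  moreover have "compact (closure {x. f x \<noteq> 0})" using fC by (simp add: CK_def)
  ultimately show ?thesis unfolding CK_on_def CK_def mem_Collect_eq by metis
qed

lemma CK_mult:
  fixes f g :: "'x::t2_space \<Rightarrow> 'k::field"
  assumes f: "f \<in> CK_on A" and g: "g \<in> CK_on B"
  shows "(\<lambda>x. f x * g x) \<in> CK_on (A \<inter> B)"
proof -
  have fC: "f \<in> CK" and gC: "g \<in> CK" using f g by (auto simp: CK_on_def)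
  have lc: "\<exists>U. open U \<and> x \<in> U \<and> (\<forall>y\<in>U. f y * g y = f x * g x)" for x
  proof -
    obtain U1 where U1: "open U1" "x \<in> U1" "\<forall>y\<in>U1. f y = f x" using CK_locconst[OF fC] by blast
    obtain U2 where U2: "open U2" "x \<in> U2" "\<forall>y\<in>U2. g y = g x" using CK_locconst[OF gC] by blast
    have "open (U1 \<inter> U2)" "x \<in> U1 \<inter> U2" using U1 U2 by auto
    moreover have "\<forall>y\<in>U1 \<inter> U2. f y = f x \<and> g y = g x" using U1(3) U2(3) by blast
    ultimately show ?thesis by (metis (no_types, lifting))
  qed
  have "{x. f x * g x \<noteq> 0} \<subseteq> {x. f x \<noteq> 0}" by auto
  then have cmp: "compact (closure {x. f x * g x \<noteq> 0})"
    by (rule compact_closure_sub[OF CK_compact_supp[OF fC]])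
  have van: "\<forall>x. x \<notin> A \<inter> B \<longrightarrow> f x * g x = 0" using f g by (auto simp: CK_on_def)
  show ?thesis unfolding CK_on_def CK_def mem_Collect_eq using lc cmp van by blast
qed

lemma CK_sum:
  fixes F :: "'i \<Rightarrow> 'x::t2_space \<Rightarrow> 'k::field"
  assumes "finite S"
  shows "(\<forall>i\<in>S. F i \<in> CK_on W) \<Longrightarrow> (\<lambda>x. \<Sum>i\<in>S. F i x) \<in> CK_on W"
  using assms
proof (induction S rule: finite_induct)
  case empty
  then show ?case using zero_CK_on by simp
next
  case (insert i S)
  then show ?case using CK_add[of "F i" W "\<lambda>x. \<Sum>i\<in>S. F i x"] by simp
qed

context
  fixes G :: "('g, 'm) monoid_scheme"
    and Xg :: "'g \<Rightarrow> 'x::t2_space set"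
    and ph :: "'g \<Rightarrow> 'x \<Rightarrow> 'x"
  assumes grp: "group G"
    and pa: "partial_action G Xg ph"
begin

lemma pa_hom: "g \<in> carrier G \<Longrightarrow> \<exists>psi. homeomorphism (Xg (inv\<^bsub>G\<^esub> g)) (Xg g) (ph g) psi"
  using pa by (simp add: partial_action_def)

lemma pa_ii: "g \<in> carrier G \<Longrightarrow> h \<in> carrier G \<Longrightarrow>
   ph g ` (Xg (inv\<^bsub>G\<^esub> g) \<inter> Xg h) = Xg g \<inter> Xg (g \<otimes>\<^bsub>G\<^esub> h)"
  using pa by (simp add: partial_action_def)

lemma act_CK:
  fixes f :: "'x \<Rightarrow> 'k::field"
  assumes g: "g \<in> carrier G" and f: "f \<in> CK_on (Xg (inv\<^bsub>G\<^esub> g))"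
  shows "act_fun G Xg ph g f \<in> CK_on (Xg g)"
proof -
  have ig: "inv\<^bsub>G\<^esub> g \<in> carrier G" using grp g by simp
  obtain psi where hom: "homeomorphism (Xg (inv\<^bsub>G\<^esub> g)) (Xg g) (ph g) psi" using pa_hom[OF g] by blast
  obtain psi' where hom': "homeomorphism (Xg (inv\<^bsub>G\<^esub> (inv\<^bsub>G\<^esub> g))) (Xg (inv\<^bsub>G\<^esub> g)) (ph (inv\<^bsub>G\<^esub> g)) psi'"
    using pa_hom[OF ig] by blast
  have cont': "continuous_on (Xg g) (ph (inv\<^bsub>G\<^esub> g))"
    using hom' grp g by (simp add: homeomorphism_def group.inv_inv)
  have contg: "continuous_on (Xg (inv\<^bsub>G\<^esub> g)) (ph g)" and img: "ph g ` Xg (inv\<^bsub>G\<^esub> g) = Xg g"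
    using hom by (simp_all add: homeomorphism_def)
  have fC: "f \<in> CK" using f by (simp add: CK_on_def)
  define S where "S = {x. f x \<noteq> 0}"
  have Sc: "compact S" unfolding S_def using CK_compact_supp[OF fC] .
  have SX: "S \<subseteq> Xg (inv\<^bsub>G\<^esub> g)" using f by (auto simp: S_def CK_on_def)
  define T where "T = ph g ` S"
  have Tc: "compact T" unfolding T_def
    using compact_continuous_image[OF continuous_on_subset[OF contg SX] Sc] .
  have TX: "T \<subseteq> Xg g" using SX img T_def by auto
  have Tcl: "closed T" using Tc compact_imp_closed by blast
  let ?F = "act_fun G Xg ph g f"
  have supp: "{x. ?F x \<noteq> 0} \<subseteq> T"
  proof
    fix x assume "x \<in> {x. ?F x \<noteq> 0}"
    then have x: "x \<in> Xg g" and "f (ph (inv\<^bsub>G\<^esub> g) x) \<noteq> 0" by (auto simp: act_fun_def split: if_splits)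
    then have "ph (inv\<^bsub>G\<^esub> g) x \<in> S" by (simp add: S_def)
    then show "x \<in> T" unfolding T_def using pa_comp[OF grp pa g x] by (metis image_eqI)
  qed
  have lc: "\<exists>U. open U \<and> x \<in> U \<and> (\<forall>y\<in>U. ?F y = ?F x)" for x
  proof (cases "x \<in> Xg g")
    case True
    define z where "z = ph (inv\<^bsub>G\<^esub> g) x"
    obtain U where U: "open U" "z \<in> U" "\<forall>y\<in>U. f y = f z" using CK_locconst[OF fC] by blast
    obtain A where A: "open A" "A \<inter> Xg g = ph (inv\<^bsub>G\<^esub> g) -` U \<inter> Xg g"
      using cont' U(1) unfolding continuous_on_open_invariant by blast
    have "open (A \<inter> Xg g)" using A(1) pa_open[OF grp pa g] by blast
    moreover have "x \<in> A \<inter> Xg g" using A(2) True U(2) z_def by blast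
    moreover have "\<forall>y\<in>A \<inter> Xg g. ?F y = ?F x"
    proof
      fix y assume "y \<in> A \<inter> Xg g"
      then have "y \<in> Xg g" "ph (inv\<^bsub>G\<^esub> g) y \<in> U" using A(2) by auto
      then have "f (ph (inv\<^bsub>G\<^esub> g) y) = f z" using U(3) by blast
      then show "?F y = ?F x" using True \<open>y \<in> Xg g\<close> z_def by (simp add: act_fun_def)
    qed
    ultimately show ?thesis by blast
  next
    case False
    then have "x \<notin> T" using TX by blast
    moreover have "\<forall>y\<in>-T. ?F y = ?F x"
    proof
      fix y assume "y \<in> -T" then have "?F y = 0" using supp by blast
      moreover have "?F x = 0" using False by (simp add: act_fun_def)
      ultimately show "?F y = ?F x" by simp
    qed
    moreover have "open (-T)" using Tcl by (simp add: open_Compl)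
    moreover have "x \<in> -T" using \<open>x \<notin> T\<close> by simp
    ultimately show ?thesis by blast
  qed
  have "compact (closure {x. ?F x \<noteq> 0})" using compact_closure_sub[OF Tc supp] .
  then show ?thesis using lc unfolding CK_on_def CK_def by (auto simp: act_fun_def)
qed

lemma term_CK:
  fixes u b :: "'x \<Rightarrow> 'k::field"
  assumes g: "g \<in> carrier G" and k: "k \<in> carrier G"
    and u: "u \<in> CK_on (Xg g)" and b: "b \<in> CK_on (Xg (inv\<^bsub>G\<^esub> g \<otimes>\<^bsub>G\<^esub> k))"
  shows "act_fun G Xg ph g (\<lambda>y. act_fun G Xg ph (inv\<^bsub>G\<^esub> g) u y * b y) \<in> CK_on (Xg k)"
proof -
  have ig: "inv\<^bsub>G\<^esub> g \<in> carrier G" using grp g by simp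
  have h: "inv\<^bsub>G\<^esub> g \<otimes>\<^bsub>G\<^esub> k \<in> carrier G" using grp ig k by (simp add: group.is_monoid monoid.m_closed)
  have gh: "g \<otimes>\<^bsub>G\<^esub> (inv\<^bsub>G\<^esub> g \<otimes>\<^bsub>G\<^esub> k) = k"
    using group.inv_solve_left'[OF grp h g k] by simp
  have "act_fun G Xg ph (inv\<^bsub>G\<^esub> g) u \<in> CK_on (Xg (inv\<^bsub>G\<^esub> g))"
    using act_CK[OF ig] u grp g by (simp add: group.inv_inv)
  from CK_mult[OF this b]
  have P: "(\<lambda>y. act_fun G Xg ph (inv\<^bsub>G\<^esub> g) u y * b y) \<in> CK_on (Xg (inv\<^bsub>G\<^esub> g) \<inter> Xg (inv\<^bsub>G\<^esub> g \<otimes>\<^bsub>G\<^esub> k))" .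
  have A: "act_fun G Xg ph g (\<lambda>y. act_fun G Xg ph (inv\<^bsub>G\<^esub> g) u y * b y) \<in> CK_on (Xg g)"
    using act_CK[OF g CK_on_mono[OF P]] by blast
  have "x \<in> Xg k" if nz: "act_fun G Xg ph g (\<lambda>y. act_fun G Xg ph (inv\<^bsub>G\<^esub> g) u y * b y) x \<noteq> 0" for x
  proof -
    define z where "z = ph (inv\<^bsub>G\<^esub> g) x"
    have x: "x \<in> Xg g"
    proof (rule ccontr)
      assume "x \<notin> Xg g" then show False using nz by (simp add: act_fun_def)
    qed
    have Pz: "act_fun G Xg ph (inv\<^bsub>G\<^esub> g) u z * b z \<noteq> 0"
      using nz x by (simp add: act_fun_def z_def)
    have "z \<in> Xg (inv\<^bsub>G\<^esub> g) \<inter> Xg (inv\<^bsub>G\<^esub> g \<otimes>\<^bsub>G\<^esub> k)" using P Pz unfolding CK_on_def mem_Collect_eq by blast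
    then have "ph g z \<in> Xg g \<inter> Xg (g \<otimes>\<^bsub>G\<^esub> (inv\<^bsub>G\<^esub> g \<otimes>\<^bsub>G\<^esub> k))"
      using pa_ii[OF g h] by blast
    then show ?thesis using gh pa_comp[OF grp pa g x] z_def by simp
  qed
  then show ?thesis using A unfolding CK_on_def mem_Collect_eq by blast
qed

lemma ring_zero: "(skew_zero :: 'g \<Rightarrow> 'x \<Rightarrow> 'k::field) \<in> skew_ring G Xg"
  by (simp add: skew_ring_def skew_zero_def zero_CK_on)

lemma ring_add:
  fixes a b :: "'g \<Rightarrow> 'x \<Rightarrow> 'k::field"
  assumes a: "a \<in> skew_ring G Xg" and b: "b \<in> skew_ring G Xg"
  shows "skew_add a b \<in> skew_ring G Xg"
proof -
  have "{g. skew_add a b g \<noteq> (\<lambda>_. 0)} \<subseteq> {g. a g \<noteq> (\<lambda>_. 0)} \<union> {g. b g \<noteq> (\<lambda>_. 0)}"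
    by (auto simp: skew_add_def)
  moreover have "finite ({g. a g \<noteq> (\<lambda>_. 0)} \<union> {g. b g \<noteq> (\<lambda>_. 0)})"
    using a b by (simp add: skew_ring_def)
  ultimately have fin: "finite {g. skew_add a b g \<noteq> (\<lambda>_. 0)}" by (rule finite_subset)
  have out: "\<forall>g. g \<notin> carrier G \<longrightarrow> skew_add a b g = (\<lambda>_. 0)"
    using a b by (simp add: skew_ring_def skew_add_def)
  have "\<forall>g\<in>carrier G. skew_add a b g \<in> CK_on (Xg g)"
    using a b CK_add unfolding skew_ring_def skew_add_def by blast
  then show ?thesis using fin out unfolding skew_ring_def by blast
qed

lemma ring_neg:
  fixes a :: "'g \<Rightarrow> 'x \<Rightarrow> 'k::field"
  assumes a: "a \<in> skew_ring G Xg"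
  shows "skew_neg a \<in> skew_ring G Xg"
proof -
  have "{g. skew_neg a g \<noteq> (\<lambda>_. 0)} = {g. a g \<noteq> (\<lambda>_. 0)}"
    by (auto simp: skew_neg_def fun_eq_iff)
  moreover have "\<forall>g. g \<notin> carrier G \<longrightarrow> skew_neg a g = (\<lambda>_. 0)"
    using a by (simp add: skew_ring_def skew_neg_def)
  moreover have "\<forall>g\<in>carrier G. skew_neg a g \<in> CK_on (Xg g)"
    using a CK_neg unfolding skew_ring_def skew_neg_def by blast
  ultimately show ?thesis using a unfolding skew_ring_def by simp
qed

lemma ring_mult:
  fixes a r :: "'g \<Rightarrow> 'x \<Rightarrow> 'k::field"
  assumes r: "r \<in> skew_ring G Xg" and a: "a \<in> skew_ring G Xg"
  shows "skew_mult G Xg ph r a \<in> skew_ring G Xg"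
proof -
  have fr: "finite {g. r g \<noteq> (\<lambda>_. 0)}" and fa: "finite {g. a g \<noteq> (\<lambda>_. 0)}"
    using r a by (simp_all add: skew_ring_def)
  have fin: "finite {g\<in>carrier G. r g \<noteq> (\<lambda>_. 0)}" using fr by (rule finite_subset[rotated]) auto
  have comp: "skew_mult G Xg ph r a k \<in> CK_on (Xg k)" if k: "k \<in> carrier G" for k
  proof -
    have "(\<lambda>x. \<Sum>g\<in>{g\<in>carrier G. r g \<noteq> (\<lambda>_. 0)}.
              act_fun G Xg ph g (\<lambda>y. act_fun G Xg ph (inv\<^bsub>G\<^esub> g) (r g) y * a (inv\<^bsub>G\<^esub> g \<otimes>\<^bsub>G\<^esub> k) y) x)
          \<in> CK_on (Xg k)"
    proof (rule CK_sum[OF fin], intro ballI)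
      fix g assume "g \<in> {g\<in>carrier G. r g \<noteq> (\<lambda>_. 0)}"
      then have g: "g \<in> carrier G" by simp
      have h: "inv\<^bsub>G\<^esub> g \<otimes>\<^bsub>G\<^esub> k \<in> carrier G"
        using grp g k by (simp add: group.is_monoid monoid.m_closed)
      show "act_fun G Xg ph g (\<lambda>y. act_fun G Xg ph (inv\<^bsub>G\<^esub> g) (r g) y * a (inv\<^bsub>G\<^esub> g \<otimes>\<^bsub>G\<^esub> k) y) \<in> CK_on (Xg k)"
        using term_CK[OF g k ring_in[OF grp pa r g] ring_in[OF grp pa a h]] .
    qed
    then show ?thesis using k by (simp add: skew_mult_def)
  qed
  have sub: "{k. skew_mult G Xg ph r a k \<noteq> (\<lambda>_. 0)} \<subseteq>
      (\<lambda>(g, h). g \<otimes>\<^bsub>G\<^esub> h) ` ({g. r g \<noteq> (\<lambda>_. 0)} \<times> {h. a h \<noteq> (\<lambda>_. 0)})"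
  proof
    fix k assume "k \<in> {k. skew_mult G Xg ph r a k \<noteq> (\<lambda>_. 0)}"
    then obtain x where k: "k \<in> carrier G" and
      nz: "(\<Sum>g\<in>{g\<in>carrier G. r g \<noteq> (\<lambda>_. 0)}.
              act_fun G Xg ph g (\<lambda>y. act_fun G Xg ph (inv\<^bsub>G\<^esub> g) (r g) y * a (inv\<^bsub>G\<^esub> g \<otimes>\<^bsub>G\<^esub> k) y) x) \<noteq> 0"
      by (auto simp: skew_mult_def fun_eq_iff split: if_splits)
    then obtain g where g: "g \<in> carrier G" "r g \<noteq> (\<lambda>_. 0)"
      and t: "act_fun G Xg ph g (\<lambda>y. act_fun G Xg ph (inv\<^bsub>G\<^esub> g) (r g) y * a (inv\<^bsub>G\<^esub> g \<otimes>\<^bsub>G\<^esub> k) y) x \<noteq> 0"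
      using sum.not_neutral_contains_not_neutral by blast
    have "a (inv\<^bsub>G\<^esub> g \<otimes>\<^bsub>G\<^esub> k) \<noteq> (\<lambda>_. 0)"
    proof
      assume "a (inv\<^bsub>G\<^esub> g \<otimes>\<^bsub>G\<^esub> k) = (\<lambda>_. 0)"
      then show False using t by (simp add: act_fun_def)
    qed
    moreover have "k = g \<otimes>\<^bsub>G\<^esub> (inv\<^bsub>G\<^esub> g \<otimes>\<^bsub>G\<^esub> k)"
      using grp g k by (metis group.inv_closed group.inv_solve_left' group.is_monoid monoid.m_closed)
    ultimately show "k \<in> (\<lambda>(g, h). g \<otimes>\<^bsub>G\<^esub> h) ` ({g. r g \<noteq> (\<lambda>_. 0)} \<times> {h. a h \<noteq> (\<lambda>_. 0)})"
      using g by (intro image_eqI[of _ _ "(g, inv\<^bsub>G\<^esub> g \<otimes>\<^bsub>G\<^esub> k)"]) auto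
  qed
  have "finite {k. skew_mult G Xg ph r a k \<noteq> (\<lambda>_. 0)}"
    using finite_subset[OF sub] fr fa by blast
  moreover have "\<forall>g. g \<notin> carrier G \<longrightarrow> skew_mult G Xg ph r a g = (\<lambda>_. 0)"
    by (simp add: skew_mult_def)
  ultimately show ?thesis using comp unfolding skew_ring_def by blast
qed

end


context
  fixes G :: "('g, 'm) monoid_scheme"
    and Xg :: "'g \<Rightarrow> 'x::t2_space set"
    and ph :: "'g \<Rightarrow> 'x \<Rightarrow> 'x"
    and I :: "('g \<Rightarrow> 'x \<Rightarrow> 'k::field) set"
  assumes lc: "locally_compact_space (euclidean :: 'x topology)"
    and td: "totally_disconnected_space (euclidean :: 'x topology)"
    and grp: "group G"
    and pa: "partial_action G Xg ph"
    and idl: "skew_ideal G Xg ph I"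
begin

lemma one_c: "\<one>\<^bsub>G\<^esub> \<in> carrier G" using grp by (simp add: group.is_monoid monoid.one_closed)
lemma inv_c: "g \<in> carrier G \<Longrightarrow> inv\<^bsub>G\<^esub> g \<in> carrier G" using grp by simp
lemma m_c: "g \<in> carrier G \<Longrightarrow> h \<in> carrier G \<Longrightarrow> g \<otimes>\<^bsub>G\<^esub> h \<in> carrier G"
  using grp by (simp add: group.is_monoid monoid.m_closed)

lemma I_ring: "a \<in> I \<Longrightarrow> a \<in> skew_ring G Xg" using idl by (auto simp: skew_ideal_def)
lemma I_zero: "skew_zero \<in> I" using idl by (auto simp: skew_ideal_def)
lemma I_add: "a \<in> I \<Longrightarrow> b \<in> I \<Longrightarrow> skew_add a b \<in> I" using idl by (auto simp: skew_ideal_def)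
lemma I_neg: "a \<in> I \<Longrightarrow> skew_neg a \<in> I" using idl by (auto simp: skew_ideal_def)
lemma I_lmult: "a \<in> I \<Longrightarrow> r \<in> skew_ring G Xg \<Longrightarrow> skew_mult G Xg ph r a \<in> I"
  using idl by (auto simp: skew_ideal_def)
lemma I_rmult: "a \<in> I \<Longrightarrow> r \<in> skew_ring G Xg \<Longrightarrow> skew_mult G Xg ph a r \<in> I"
  using idl by (auto simp: skew_ideal_def)

lemma one_CK: "mon \<one>\<^bsub>G\<^esub> f \<in> I \<Longrightarrow> f \<in> CK"
  using ring_in[OF grp pa I_ring one_c, of "mon \<one>\<^bsub>G\<^esub> f"] by (simp add: mon_def CK_on_def)

lemma V_iff: "x \<in> V_of G I \<longleftrightarrow> (\<exists>f. mon \<one>\<^bsub>G\<^esub> f \<in> I \<and> f x \<noteq> 0)"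
proof
  assume "x \<in> V_of G I"
  then obtain f where "mon \<one>\<^bsub>G\<^esub> f \<in> I" "x \<in> supp f"
    unfolding V_of_def mon_def by blast
  then show "\<exists>f. mon \<one>\<^bsub>G\<^esub> f \<in> I \<and> f x \<noteq> 0"
    using one_CK CK_supp_eq by (auto simp: supp_def)
next
  assume "\<exists>f. mon \<one>\<^bsub>G\<^esub> f \<in> I \<and> f x \<noteq> 0"
  then obtain f where "mon \<one>\<^bsub>G\<^esub> f \<in> I" "x \<in> supp f"
    unfolding supp_def by (meson closure_subset subsetD mem_Collect_eq)
  then show "x \<in> V_of G I" unfolding V_of_def mon_def by blast
qed

lemma invariance:
  assumes g: "g \<in> carrier G" and x: "x \<in> Xg g" and z: "ph (inv\<^bsub>G\<^esub> g) x \<in> V_of G I"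
  shows "x \<in> V_of G I"
proof -
  define z where "z = ph (inv\<^bsub>G\<^esub> g) x"
  have zX: "z \<in> Xg (inv\<^bsub>G\<^esub> g)" using pa_maps[OF grp pa g x] z_def by simp
  obtain f where f: "mon \<one>\<^bsub>G\<^esub> f \<in> I" "f z \<noteq> 0" using z V_iff z_def by blast
  obtain b :: "'x \<Rightarrow> 'k" where b: "b \<in> CK_on (Xg g)" "b x = 1"
    using exists_bump[OF lc td pa_open[OF grp pa g] x] by blast
  obtain c :: "'x \<Rightarrow> 'k" where c: "c \<in> CK_on (Xg (inv\<^bsub>G\<^esub> g))" "c z = 1"
    using exists_bump[OF lc td pa_open[OF grp pa inv_c[OF g]] zX] by blast
  have in1: "mon (inv\<^bsub>G\<^esub> g) (\<lambda>y. f y * c y) \<in> I"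
    using I_rmult[OF f(1) mono_ring[OF grp pa inv_c[OF g] c(1)]]
    unfolding mono_mult_one[OF grp pa inv_c[OF g]] .
  have rinv: "g \<otimes>\<^bsub>G\<^esub> inv\<^bsub>G\<^esub> g = \<one>\<^bsub>G\<^esub>" using grp g by (simp add: group.r_inv)
  have "mon \<one>\<^bsub>G\<^esub> (act_fun G Xg ph g (\<lambda>y. act_fun G Xg ph (inv\<^bsub>G\<^esub> g) b y * (f y * c y))) \<in> I"
    using I_lmult[OF in1 mono_ring[OF grp pa g b(1)]]
    unfolding mono_mult[OF grp pa g inv_c[OF g]] rinv .
  moreover have "act_fun G Xg ph g (\<lambda>y. act_fun G Xg ph (inv\<^bsub>G\<^esub> g) b y * (f y * c y)) x \<noteq> 0"
    using act_eval[OF grp pa g x, of b "\<lambda>y. f y * c y"] b c f z_def by simp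
  ultimately show ?thesis using V_iff by blast
qed

lemma restrI:
  assumes "a \<in> skew_ring G Xg" "\<And>g x. g \<in> carrier G \<Longrightarrow> a g x \<noteq> 0 \<Longrightarrow> x \<in> V_of G I"
  shows "a \<in> skew_restr G Xg (V_of G I)"
  using assms ring_in[OF grp pa assms(1)] unfolding skew_restr_def CK_on_def by auto

lemma restrD:
  assumes "a \<in> skew_restr G Xg (V_of G I)" "g \<in> carrier G" "a g x \<noteq> 0"
  shows "x \<in> V_of G I"
  using assms unfolding skew_restr_def CK_on_def by auto

lemma restr_ring: "a \<in> skew_restr G Xg (V_of G I) \<Longrightarrow> a \<in> skew_ring G Xg"
  unfolding skew_restr_def by auto

lemma maximal:
  assumes J: "skew_ideal G Xg ph J" "graded G J" "J \<subseteq> I" and a: "a \<in> J"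
  shows "a \<in> skew_restr G Xg (V_of G I)"
proof (rule restrI)
  show ar: "a \<in> skew_ring G Xg" using a J I_ring by auto
  fix g x assume g: "g \<in> carrier G" and ax: "a g x \<noteq> 0"
  have x: "x \<in> Xg g" using ring_in[OF grp pa ar g] ax by (auto simp: CK_on_def)
  define z where "z = ph (inv\<^bsub>G\<^esub> g) x"
  have zX: "z \<in> Xg (inv\<^bsub>G\<^esub> g)" using pa_maps[OF grp pa g x] z_def by simp
  obtain c :: "'x \<Rightarrow> 'k" where c: "c \<in> CK_on (Xg (inv\<^bsub>G\<^esub> g))" "c z = 1"
    using exists_bump[OF lc td pa_open[OF grp pa inv_c[OF g]] zX] by blast
  have rinv: "g \<otimes>\<^bsub>G\<^esub> inv\<^bsub>G\<^esub> g = \<one>\<^bsub>G\<^esub>" using grp g by (simp add: group.r_inv)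
  have "homog a g \<in> J" using J(2) a g unfolding graded_def by blast
  then have "mon g (a g) \<in> I" using J(3) homog_mono[of a g] by auto
  from I_rmult[OF this mono_ring[OF grp pa inv_c[OF g] c(1)]]
  have "mon \<one>\<^bsub>G\<^esub> (act_fun G Xg ph g (\<lambda>y. act_fun G Xg ph (inv\<^bsub>G\<^esub> g) (a g) y * c y)) \<in> I"
    unfolding mono_mult[OF grp pa g inv_c[OF g]] rinv .
  moreover have "act_fun G Xg ph g (\<lambda>y. act_fun G Xg ph (inv\<^bsub>G\<^esub> g) (a g) y * c y) x \<noteq> 0"
    using act_eval[OF grp pa g x, of "a g" c] c ax z_def by simp
  ultimately show "x \<in> V_of G I" using V_iff by blast
qed

lemma ind_S:
  assumes fI: "mon \<one>\<^bsub>G\<^esub> f \<in> I"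
  shows "mon \<one>\<^bsub>G\<^esub> (\<lambda>x. if f x \<noteq> 0 then 1 else 0) \<in> I"
proof -
  have f: "f \<in> CK" using one_CK[OF fI] .
  define q where "q = (\<lambda>x. if f x \<noteq> 0 then inverse (f x) else 0)"
  have "q \<in> CK"
  proof -
    have "\<exists>U. open U \<and> x \<in> U \<and> (\<forall>y\<in>U. q y = q x)" for x
      using CK_locconst[OF f, of x] unfolding q_def by metis
    moreover have "{x. q x \<noteq> 0} = {x. f x \<noteq> 0}" by (auto simp: q_def)
    ultimately show ?thesis using f unfolding CK_def by auto
  qed
  then have "q \<in> CK_on (Xg \<one>\<^bsub>G\<^esub>)" by (simp add: CK_on_def pa_one[OF grp pa])
  from I_lmult[OF fI mono_ring[OF grp pa one_c this]]
  have "mon \<one>\<^bsub>G\<^esub> (\<lambda>y. q y * f y) \<in> I" unfolding mono_mult_one[OF grp pa one_c] .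
  moreover have "(\<lambda>y. q y * f y) = (\<lambda>x. if f x \<noteq> 0 then 1 else 0)"
    by (auto simp: q_def)
  ultimately show ?thesis by simp
qed

lemma union_S:
  assumes aI: "mon \<one>\<^bsub>G\<^esub> a \<in> I" and bI: "mon \<one>\<^bsub>G\<^esub> b \<in> I"
  shows "mon \<one>\<^bsub>G\<^esub> (\<lambda>x. a x + b x - a x * b x) \<in> I"
proof -
  from I_rmult[OF aI I_ring[OF bI]]
  have p: "mon \<one>\<^bsub>G\<^esub> (\<lambda>y. a y * b y) \<in> I" unfolding mono_mult_one[OF grp pa one_c] .
  have "skew_add (skew_add (mon \<one>\<^bsub>G\<^esub> a) (mon \<one>\<^bsub>G\<^esub> b)) (skew_neg (mon \<one>\<^bsub>G\<^esub> (\<lambda>y. a y * b y))) \<in> I"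
    using I_add I_neg aI bI p by blast
  moreover have "skew_add (skew_add (mon \<one>\<^bsub>G\<^esub> a) (mon \<one>\<^bsub>G\<^esub> b)) (skew_neg (mon \<one>\<^bsub>G\<^esub> (\<lambda>y. a y * b y)))
     = mon \<one>\<^bsub>G\<^esub> (\<lambda>x. a x + b x - a x * b x)"
    by (auto simp: skew_add_def skew_neg_def mon_def fun_eq_iff)
  ultimately show ?thesis by simp
qed

lemma mon_zero_I: "mon g (\<lambda>_. 0::'k) \<in> I"
  using I_zero by (simp add: mono_zero)

lemma cover:
  assumes "finite F"
  shows "(\<forall>f\<in>F. mon \<one>\<^bsub>G\<^esub> f \<in> I) \<Longrightarrow> \<exists>ch. mon \<one>\<^bsub>G\<^esub> ch \<in> I \<and> (\<forall>x. (\<exists>f\<in>F. f x \<noteq> 0) \<longrightarrow> ch x = 1)"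
  using assms
proof (induction F rule: finite_induct)
  case empty
  have "mon \<one>\<^bsub>G\<^esub> (\<lambda>_. 0::'k) \<in> I" by (rule mon_zero_I)
  then show ?case by blast
next
  case (insert f F)
  then obtain ch where c: "mon \<one>\<^bsub>G\<^esub> ch \<in> I" "\<forall>x. (\<exists>f\<in>F. f x \<noteq> 0) \<longrightarrow> ch x = 1" by auto
  define i where "i = (\<lambda>x. if f x \<noteq> 0 then 1 else (0::'k))"
  have iI: "mon \<one>\<^bsub>G\<^esub> i \<in> I" unfolding i_def using ind_S insert by auto
  show ?case
    using union_S[OF c(1) iI] c(2)
    by (intro exI[of _ "\<lambda>x. ch x + i x - ch x * i x"]) (auto simp: i_def)
qed

lemma homog_in_I:
  assumes a: "a \<in> skew_restr G Xg (V_of G I)" and g: "g \<in> carrier G"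
  shows "mon g (a g) \<in> I"
proof -
  have ar: "a \<in> skew_ring G Xg" using restr_ring[OF a] .
  have agC: "a g \<in> CK_on (Xg g)" using ring_in[OF grp pa ar g] .
  then have agCK: "a g \<in> CK" by (simp add: CK_on_def)
  have K: "compact {x. a g x \<noteq> 0}" using CK_compact_supp[OF agCK] .
  have sub: "{x. a g x \<noteq> 0} \<subseteq> (\<Union>f\<in>{f. mon \<one>\<^bsub>G\<^esub> f \<in> I}. {x. f x \<noteq> 0})"
  proof
    fix x assume "x \<in> {x. a g x \<noteq> 0}"
    then have "x \<in> V_of G I" using restrD[OF a g] by simp
    then obtain f where "mon \<one>\<^bsub>G\<^esub> f \<in> I" "f x \<noteq> 0" using V_iff by blast
    then show "x \<in> (\<Union>f\<in>{f. mon \<one>\<^bsub>G\<^esub> f \<in> I}. {x. f x \<noteq> 0})" by blast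
  qed
  have opn: "\<And>f. f \<in> {f. mon \<one>\<^bsub>G\<^esub> f \<in> I} \<Longrightarrow> open {x. f x \<noteq> 0}"
    using one_CK CK_open_supp by blast
  obtain F where F: "F \<subseteq> {f. mon \<one>\<^bsub>G\<^esub> f \<in> I}" "finite F" "{x. a g x \<noteq> 0} \<subseteq> (\<Union>f\<in>F. {x. f x \<noteq> 0})"
    using compactE_image[OF K opn sub] by blast
  obtain ch where c: "mon \<one>\<^bsub>G\<^esub> ch \<in> I" "\<forall>x. (\<exists>f\<in>F. f x \<noteq> 0) \<longrightarrow> ch x = 1"
    using cover[OF F(2)] F(1) by blast
  from I_rmult[OF c(1) mono_ring[OF grp pa g agC]]
  have "mon g (\<lambda>y. ch y * a g y) \<in> I" unfolding mono_mult_one[OF grp pa g] .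
  moreover have "(\<lambda>y. ch y * a g y) = a g"
  proof
    fix y show "ch y * a g y = a g y"
    proof (cases "a g y = 0")
      case True then show ?thesis by simp
    next
      case False
      then have "y \<in> (\<Union>f\<in>F. {x. f x \<noteq> 0})" using F(3) by blast
      then obtain f where "f \<in> F" "f y \<noteq> 0" by blast
      then have "ch y = 1" using c(2) by blast
      then show ?thesis by simp
    qed
  qed
  ultimately show ?thesis by simp
qed

lemma sum_in_I:
  assumes "finite F"
  shows "\<forall>a. a \<in> skew_ring G Xg \<and> {g. a g \<noteq> (\<lambda>_. 0)} \<subseteq> F \<and> (\<forall>g\<in>carrier G. mon g (a g) \<in> I) \<longrightarrow> a \<in> I"
  using assms
proof (induction F rule: finite_induct)
  case empty
  show ?case
  proof (intro allI impI)
    fix a :: "'g \<Rightarrow> 'x \<Rightarrow> 'k" assume "a \<in> skew_ring G Xg \<and> {g. a g \<noteq> (\<lambda>_. 0)} \<subseteq> {} \<and> (\<forall>g\<in>carrier G. mon g (a g) \<in> I)"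
    then have "a = skew_zero" by (auto simp: skew_zero_def fun_eq_iff)
    then show "a \<in> I" using I_zero by simp
  qed
next
  case (insert g F)
  show ?case
  proof (intro allI impI)
    fix a :: "'g \<Rightarrow> 'x \<Rightarrow> 'k"
    assume A: "a \<in> skew_ring G Xg \<and> {g. a g \<noteq> (\<lambda>_. 0)} \<subseteq> insert g F \<and> (\<forall>g\<in>carrier G. mon g (a g) \<in> I)"
    show "a \<in> I"
    proof (cases "g \<in> carrier G")
      case False
      then have "a g = (\<lambda>_. 0)" using ring_out[OF grp pa] A by blast
      then have "{g. a g \<noteq> (\<lambda>_. 0)} \<subseteq> F" using A by auto
      then show ?thesis using insert.IH A by blast
    next
      case True
      define a' where "a' = a(g := (\<lambda>_. 0))"
      have Ar: "a \<in> skew_ring G Xg" using A by blast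
      have "{h. a' h \<noteq> (\<lambda>_. 0)} \<subseteq> {h. a h \<noteq> (\<lambda>_. 0)}" by (auto simp: a'_def)
      moreover have "finite {h. a h \<noteq> (\<lambda>_. 0)}" using Ar by (simp add: skew_ring_def)
      ultimately have fin': "finite {h. a' h \<noteq> (\<lambda>_. 0)}" by (rule finite_subset)
      have out': "\<forall>h. h \<notin> carrier G \<longrightarrow> a' h = (\<lambda>_. 0)" using Ar by (simp add: a'_def skew_ring_def)
      have cmp': "\<forall>h\<in>carrier G. a' h \<in> CK_on (Xg h)" using Ar by (simp add: a'_def skew_ring_def zero_CK_on)
      have "a' \<in> skew_ring G Xg" using fin' out' cmp' unfolding skew_ring_def mem_Collect_eq by blast
      moreover have "{h. a' h \<noteq> (\<lambda>_. 0)} \<subseteq> F" using A by (auto simp: a'_def)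
      moreover have "\<forall>h\<in>carrier G. mon h (a' h) \<in> I"
        using A mon_zero_I by (auto simp: a'_def)
      ultimately have a'I: "a' \<in> I" using insert.IH by blast
      have eq: "skew_add (mon g (a g)) a' = a"
        by (auto simp: skew_add_def mon_def a'_def fun_eq_iff)
      have "mon g (a g) \<in> I" using A True by blast
      from I_add[OF this a'I] show ?thesis unfolding eq .
    qed
  qed
qed

lemma restr_sub_I: "skew_restr G Xg (V_of G I) \<subseteq> I"
proof
  fix a :: "'g \<Rightarrow> 'x \<Rightarrow> 'k" assume a: "a \<in> skew_restr G Xg (V_of G I)"
  have ar: "a \<in> skew_ring G Xg" using restr_ring[OF a] .
  have "finite {g. a g \<noteq> (\<lambda>_. 0)}" using ar by (simp add: skew_ring_def)
  then show "a \<in> I" using sum_in_I ar homog_in_I[OF a] by blast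
qed

lemma restr_ideal: "skew_ideal G Xg ph (skew_restr G Xg (V_of G I) :: ('g \<Rightarrow> 'x \<Rightarrow> 'b::field) set)"
proof -
  let ?R = "skew_restr G Xg (V_of G I) :: ('g \<Rightarrow> 'x \<Rightarrow> 'b) set"
  have sub: "?R \<subseteq> skew_ring G Xg" using restr_ring by blast
  have zr: "(skew_zero :: 'g \<Rightarrow> 'x \<Rightarrow> 'b) \<in> skew_ring G Xg" by (rule ring_zero[OF grp pa])
  have zero: "skew_zero \<in> ?R"
    by (rule restrI[OF zr]) (simp add: skew_zero_def)
  have add: "skew_add a b \<in> ?R" if "a \<in> ?R" "b \<in> ?R" for a b
  proof (rule restrI)
    show "skew_add a b \<in> skew_ring G Xg" using ring_add[OF grp pa] restr_ring that by blast
    fix g x assume g: "g \<in> carrier G" and nz: "skew_add a b g x \<noteq> 0"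
    then have "a g x + b g x \<noteq> 0" by (simp add: skew_add_def)
    then have "a g x \<noteq> 0 \<or> b g x \<noteq> 0" by auto
    then show "x \<in> V_of G I" using restrD[OF _ g] that by blast
  qed
  have neg: "skew_neg a \<in> ?R" if "a \<in> ?R" for a
  proof (rule restrI)
    show "skew_neg a \<in> skew_ring G Xg" using ring_neg[OF grp pa] restr_ring that by blast
    fix g x assume g: "g \<in> carrier G" and nz: "skew_neg a g x \<noteq> 0"
    then have "a g x \<noteq> 0" by (simp add: skew_neg_def)
    then show "x \<in> V_of G I" using restrD[OF _ g] that by blast
  qed
  have lm: "skew_mult G Xg ph r a \<in> ?R" if a: "a \<in> ?R" and r: "r \<in> skew_ring G Xg" for a r
  proof (rule restrI)
    show "skew_mult G Xg ph r a \<in> skew_ring G Xg" using ring_mult[OF grp pa r restr_ring[OF a]] .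
    fix k x assume k: "k \<in> carrier G" and nz: "skew_mult G Xg ph r a k x \<noteq> 0"
    obtain g where g: "g \<in> carrier G"
      and t: "act_fun G Xg ph g (\<lambda>y. act_fun G Xg ph (inv\<^bsub>G\<^esub> g) (r g) y * a (inv\<^bsub>G\<^esub> g \<otimes>\<^bsub>G\<^esub> k) y) x \<noteq> 0"
    proof -
      have "(\<Sum>g\<in>{g\<in>carrier G. r g \<noteq> (\<lambda>_. 0)}.
              act_fun G Xg ph g (\<lambda>y. act_fun G Xg ph (inv\<^bsub>G\<^esub> g) (r g) y * a (inv\<^bsub>G\<^esub> g \<otimes>\<^bsub>G\<^esub> k) y) x) \<noteq> 0"
        using nz k by (simp add: skew_mult_def)
      then show ?thesis using that sum.not_neutral_contains_not_neutral by blast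
    qed
    have x: "x \<in> Xg g"
    proof (rule ccontr)
      assume "x \<notin> Xg g" then show False using t by (simp add: act_fun_def)
    qed
    have "a (inv\<^bsub>G\<^esub> g \<otimes>\<^bsub>G\<^esub> k) (ph (inv\<^bsub>G\<^esub> g) x) \<noteq> 0"
      using t x by (simp add: act_fun_def)
    then have "ph (inv\<^bsub>G\<^esub> g) x \<in> V_of G I" using restrD[OF a m_c[OF inv_c[OF g] k]] by blast
    then show "x \<in> V_of G I" using invariance[OF g x] by blast
  qed
  have rm: "skew_mult G Xg ph a r \<in> ?R" if a: "a \<in> ?R" and r: "r \<in> skew_ring G Xg" for a r
  proof (rule restrI)
    show "skew_mult G Xg ph a r \<in> skew_ring G Xg" using ring_mult[OF grp pa restr_ring[OF a] r] .
    fix k x assume k: "k \<in> carrier G" and nz: "skew_mult G Xg ph a r k x \<noteq> 0"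
    obtain g where g: "g \<in> carrier G"
      and t: "act_fun G Xg ph g (\<lambda>y. act_fun G Xg ph (inv\<^bsub>G\<^esub> g) (a g) y * r (inv\<^bsub>G\<^esub> g \<otimes>\<^bsub>G\<^esub> k) y) x \<noteq> 0"
    proof -
      have "(\<Sum>g\<in>{g\<in>carrier G. a g \<noteq> (\<lambda>_. 0)}.
              act_fun G Xg ph g (\<lambda>y. act_fun G Xg ph (inv\<^bsub>G\<^esub> g) (a g) y * r (inv\<^bsub>G\<^esub> g \<otimes>\<^bsub>G\<^esub> k) y) x) \<noteq> 0"
        using nz k by (simp add: skew_mult_def)
      then show ?thesis using that sum.not_neutral_contains_not_neutral by blast
    qed
    have x: "x \<in> Xg g"
    proof (rule ccontr)
      assume "x \<notin> Xg g" then show False using t by (simp add: act_fun_def)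
    qed
    define z where "z = ph (inv\<^bsub>G\<^esub> g) x"
    have "act_fun G Xg ph (inv\<^bsub>G\<^esub> g) (a g) z \<noteq> 0"
      using t x by (simp add: act_fun_def z_def)
    then have "a g (ph (inv\<^bsub>G\<^esub> (inv\<^bsub>G\<^esub> g)) z) \<noteq> 0"
      by (simp add: act_fun_def split: if_splits)
    then have "a g (ph g z) \<noteq> 0" using grp g by (simp add: group.inv_inv)
    then have "a g x \<noteq> 0" using pa_comp[OF grp pa g x] z_def by simp
    then show "x \<in> V_of G I" using restrD[OF a g] by blast
  qed
  show ?thesis unfolding skew_ideal_def
    apply (intro conjI ballI)
    using sub zero add neg lm rm by simp_all
qed

lemma restr_graded: "graded G (skew_restr G Xg (V_of G I))"
  unfolding graded_def
proof (intro ballI)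
  fix a g assume a: "a \<in> skew_restr G Xg (V_of G I)" and g: "g \<in> carrier G"
  show "homog a g \<in> skew_restr G Xg (V_of G I)" unfolding homog_mono
  proof (rule restrI)
    show "mon g (a g) \<in> skew_ring G Xg"
      using mono_ring[OF grp pa g ring_in[OF grp pa restr_ring[OF a] g]] .
    fix h x assume "h \<in> carrier G" "mon g (a g) h x \<noteq> 0"
    then show "x \<in> V_of G I" using restrD[OF a g] by (auto simp: mon_def split: if_splits)
  qed
qed

end

theorem mainTheorem9:
  fixes G :: "('g, 'm) monoid_scheme"
    and Xg :: "'g \<Rightarrow> 'x::t2_space set"
    and ph :: "'g \<Rightarrow> 'x \<Rightarrow> 'x"
    and I :: "('g \<Rightarrow> 'x \<Rightarrow> 'k::field) set"
  assumes "locally_compact_space (euclidean :: 'x topology)"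
    and "totally_disconnected_space (euclidean :: 'x topology)"
    and "group G"
    and "partial_action G Xg ph"
    and "skew_ideal G Xg ph I"
  shows "skew_restr G Xg (V_of G I) \<subseteq> I
    \<and> skew_ideal G Xg ph (skew_restr G Xg (V_of G I))
    \<and> graded G (skew_restr G Xg (V_of G I))
    \<and> (\<forall>J. skew_ideal G Xg ph J \<and> graded G J \<and> J \<subseteq> I \<longrightarrow> J \<subseteq> skew_restr G Xg (V_of G I))"
proof -
  have A: "skew_restr G Xg (V_of G I) \<subseteq> I" by (rule restr_sub_I[OF assms])
  have B: "skew_ideal G Xg ph (skew_restr G Xg (V_of G I))" by (rule restr_ideal[OF assms])
  have C: "graded G (skew_restr G Xg (V_of G I))" by (rule restr_graded[OF assms])
  have D: "\<forall>J. skew_ideal G Xg ph J \<and> graded G J \<and> J \<subseteq> I \<longrightarrow> J \<subseteq> skew_restr G Xg (V_of G I)"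
    using maximal[OF assms] by blast
  show ?thesis using A B C D by blast
qed

end
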